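(* Define the multiplicative function $f$ by $f(1)=1$ and, for primes $p$ and $\nu\ge1$, $$f(p^\nu)=\begin{cases}\big(1+\frac2p\big)^{-1}\big(1-\frac1p\big)^{-2}\Big(1+\frac4p+\frac1{p^2}-\frac{3\nu+4}{p^{\nu+1}}-\frac{4}{p^{\nu+2}}+\frac{3\nu+2}{p^{\nu+3}}\Big), & p>2,\\[2mm] \frac{52}{11}-\frac{41+15\nu}{11\cdot 2^{\nu}}, & p=2,\end{cases}$$ and for $h\in\mathbb{N}$ put $c_h=\frac{11}{8}f(h)\prod_p(1-\frac1p)^2(1+\frac2p)$. For $X>1$ and $H\ge1$ let $\Sigma_2=\sum_{h\le H}c_hX(\log X)^3$. Then $$\Sigma_2=cXH(\log X)^3+O\big(XH^{\frac12}(\log X)^3\big),\qquad c=\frac43\prod_{p>2}\Big(1+\frac1p\Big)^{-1}\Big(1+\frac1p+\frac1{p^2}\Big),$$ with an absolute implied constant.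
   Context: Sums over $h$ run over positive integers; products over $p$ are over primes. *)

theory Defs
  imports "HOL-Analysis.Analysis" "HOL-Computational_Algebra.Primes"
begin

definition fpp :: "nat \<Rightarrow> nat \<Rightarrow> real" where
  "fpp p \<nu> =
     (if p = 2 then 52/11 - (41 + 15 * real \<nu>) / (11 * 2 ^ \<nu>)
      else inverse (1 + 2 / real p) * inverse ((1 - 1 / real p)\<^sup>2) *
           (1 + 4 / real p + 1 / (real p)\<^sup>2
              - (3 * real \<nu> + 4) / real p ^ (\<nu> + 1)
              - 4 / real p ^ (\<nu> + 2)
              + (3 * real \<nu> + 2) / real p ^ (\<nu> + 3)))"

definition f :: "nat \<Rightarrow> real" where
  "f n = (\<Prod>p\<in>prime_factors n. fpp p (multiplicity p n))"

definition c_coef :: "nat \<Rightarrow> real" where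
  "c_coef h = 11/8 * f h *
     (\<Prod>p. if prime p then (1 - 1 / real p)\<^sup>2 * (1 + 2 / real p) else 1)"

definition c_const :: real where
  "c_const = 4/3 *
     (\<Prod>p. if prime p \<and> p > 2
            then inverse (1 + 1 / real p) * (1 + 1 / real p + 1 / (real p)\<^sup>2) else 1)"

definition Sigma2 :: "real \<Rightarrow> real \<Rightarrow> real" where
  "Sigma2 X H = (\<Sum>h\<in>{1..nat \<lfloor>H\<rfloor>}. c_coef h * X * (ln X) ^ 3)"

end

theory Submission
  imports Defs "HOL-Probability.Probability_Mass_Function"
begin


lemma divisor_sum_prod:
  fixes \<phi> :: "nat \<Rightarrow> nat \<Rightarrow> real"
  assumes n: "n > 0" and \<phi>0: "\<And>p. \<phi> p 0 = 1"
  shows "(\<Sum>d\<in>{d. d dvd n}. \<Prod>p\<in>prime_factors d. \<phi> p (multiplicity p d))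
       = (\<Prod>p\<in>prime_factors n. \<Sum>k\<le>multiplicity p n. \<phi> p k)"
proof -
  let ?P = "prime_factors n"
  let ?E = "PiE ?P (\<lambda>p. {..multiplicity p n})"
  define h where "h e = (\<Prod>p\<in>?P. p ^ e p)" for e :: "nat \<Rightarrow> nat"
  have mult_h: "multiplicity q (h e) = (if q\<in>?P then e q else 0)" if "prime q" for q e
    unfolding h_def by (rule multiplicity_prod_prime_powers) (auto simp: that)
  have h_pos: "h e > 0" for e unfolding h_def
    by (auto intro!: prod_pos dest: in_prime_factors_imp_prime simp: prime_gt_0_nat)
  have mh: "multiplicity p (h e) = e p" if "p \<in> ?P" for p e
    using mult_h[OF in_prime_factors_imp_prime[OF that], of e] that by presburger
  have pf_h: "prime_factors (h e) = {p\<in>?P. e p > 0}" for e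
    by (auto simp: prime_factors_multiplicity mult_h split: if_splits)
  have bij: "bij_betw h ?E {d. d dvd n}"
  proof (rule bij_betwI')
    fix e1 e2 assume e: "e1 \<in> ?E" "e2 \<in> ?E"
    show "(h e1 = h e2) = (e1 = e2)"
    proof
      assume eq: "h e1 = h e2"
      show "e1 = e2"
      proof
        fix p show "e1 p = e2 p"
        proof (cases "p \<in> ?P")
          case True
          then have pp: "prime p" by (rule in_prime_factors_imp_prime)
          have 1: "multiplicity p (h e1) = e1 p" using mult_h[OF pp, of e1] True by presburger
          have 2: "multiplicity p (h e2) = e2 p" using mult_h[OF pp, of e2] True by presburger
          show ?thesis using 1 2 eq by metis
        next
          case False
          have 1: "e1 p = undefined" by (rule PiE_arb[OF e(1) False])
          have 2: "e2 p = undefined" by (rule PiE_arb[OF e(2) False])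
          show ?thesis using 1 2 by simp
        qed
      qed
    next
      assume "e1 = e2" then show "h e1 = h e2" by simp
    qed
  next
    fix e assume e: "e \<in> ?E"
    show "h e \<in> {d. d dvd n}"
    proof -
      have "h e dvd n"
      proof (rule multiplicity_le_imp_dvd)
        show "h e \<noteq> 0" using h_pos[of e] by simp
        fix q :: nat assume q: "prime q"
        show "multiplicity q (h e) \<le> multiplicity q n"
          using e by (auto simp: mult_h[OF q] PiE_iff)
      qed
      then show ?thesis by simp
    qed
  next
    fix d assume "d \<in> {d. d dvd n}"
    then have d: "d dvd n" by simp
    with n have d0: "d > 0" by (auto intro: Nat.gr0I)
    let ?e = "restrict (\<lambda>p. multiplicity p d) ?P"
    have "?e \<in> ?E" using d n by (auto simp: PiE_iff dvd_imp_multiplicity_le)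
    moreover have "d = h ?e"
    proof (rule multiplicity_eq_nat[OF d0 h_pos])
      fix q :: nat assume q: "prime q"
      show "multiplicity q d = multiplicity q (h ?e)"
      proof (cases "q \<in> ?P")
        case True then show ?thesis by (simp add: mult_h[OF q])
      next
        case False
        then have "\<not> q dvd n" using q n by (auto simp: prime_factors_dvd)
        then have "\<not> q dvd d" using d dvd_trans by blast
        then show ?thesis using False by (simp add: mult_h[OF q] not_dvd_imp_multiplicity_0)
      qed
    qed
    ultimately show "\<exists>e\<in>?E. d = h e" by blast
  qed
  have "(\<Sum>d\<in>{d. d dvd n}. \<Prod>p\<in>prime_factors d. \<phi> p (multiplicity p d))
      = (\<Sum>e\<in>?E. \<Prod>p\<in>prime_factors (h e). \<phi> p (multiplicity p (h e)))"
    by (rule sum.reindex_bij_betw[OF bij, symmetric])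
  also have "\<dots> = (\<Sum>e\<in>?E. \<Prod>p\<in>?P. \<phi> p (e p))"
  proof (rule sum.cong[OF refl])
    fix e
    have "(\<Prod>p\<in>prime_factors (h e). \<phi> p (multiplicity p (h e))) = (\<Prod>p\<in>{p\<in>?P. e p > 0}. \<phi> p (e p))"
      by (rule prod.cong) (auto simp: pf_h mh)
    also have "\<dots> = (\<Prod>p\<in>?P. \<phi> p (e p))"
      by (rule prod.mono_neutral_left) (auto simp: \<phi>0)
    finally show "(\<Prod>p\<in>prime_factors (h e). \<phi> p (multiplicity p (h e))) = (\<Prod>p\<in>?P. \<phi> p (e p))" .
  qed
  also have "\<dots> = (\<Prod>p\<in>?P. \<Sum>k\<le>multiplicity p n. \<phi> p k)"
    by (rule prod_sum_PiE[symmetric]) auto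
  finally show ?thesis .
qed

definition beta :: "nat \<Rightarrow> real" where
  "beta p = (if p = 2 then 15/11 else 3*(1+1/real p)/(1+2/real p))"

definition Gz :: "nat \<Rightarrow> nat \<Rightarrow> real" where
  "Gz p k = (1/real p)^k * (1 + beta p * real k)"

definition g :: "nat \<Rightarrow> real" where
  "g d = (\<Prod>p\<in>prime_factors d. Gz p (multiplicity p d))"

lemma beta_nonneg: "beta p \<ge> 0"
  by (auto simp: beta_def intro!: divide_nonneg_pos add_nonneg_nonneg add_pos_nonneg)

lemma beta_le3: "beta p \<le> 3"
proof -
  have "3*(1+1/real p) \<le> 3 * (1+2/real p)" by (auto simp: divide_simps)
  then show ?thesis by (auto simp: beta_def pos_divide_le_eq add_pos_nonneg)
qed

lemma Gz_nonneg: "Gz p k \<ge> 0"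
  using beta_nonneg[of p] by (auto simp: Gz_def)

lemma Gz_0 [simp]: "Gz p 0 = 1"
  by (simp add: Gz_def)

lemma g_nonneg: "g d \<ge> 0"
  by (auto simp: g_def intro!: prod_nonneg Gz_nonneg)

lemma fpp_odd_form:
  assumes "p \<ge> 3"
  defines "u \<equiv> 1 / real p"
  shows "fpp p \<nu> = inverse (1+2*u) * inverse ((1-u)\<^sup>2) *
     (1 + 4*u + 1*u^2 - (3*real \<nu>+4)*u^(\<nu>+1) - 4*u^(\<nu>+2) + (3*real \<nu> + 2)*u^(\<nu>+3))"
proof -
  have h: "a / real p ^ n = a * u ^ n" for a n
    by (simp add: u_def power_one_over)
  have h1: "a / real p = a * u" for a
    by (simp add: u_def)
  have "p \<noteq> 2" using assms by simp
  then show ?thesis unfolding fpp_def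
    by (simp only: if_False h h1) simp
qed

lemma alg_poly:
  fixes u s w :: real
  shows "(1 + 4 * u + 1 * u^2 - (3 * (w+1)+4) * (s * u * u) - 4 * (s * u * u^2) + (3 * (w+1) + 2) * (s * u * u^3))
       - (1 + 4 * u + 1 * u^2 - (3 * w+4) * (s * u) - 4 * (s * u^2) + (3 * w + 2) * (s * u^3))
       = s * u * (1-u)^2 * ((1+2 * u) + 3 * (1+u) * (w+1))"
  by (simp add: algebra_simps power2_eq_square power3_eq_cube)

lemma fpp_diff: assumes "prime p" shows "fpp p (Suc m) - fpp p m = Gz p (Suc m)"
proof (cases "p = 2")
  case True
  have "(2::real)^m > 0" by simp
  then show ?thesis using True
    by (simp add: fpp_def Gz_def beta_def field_simps)
next
  case False
  with assms have p3: "p \<ge> 3" using prime_ge_2_nat[OF assms] by linarith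
  define u where "u = 1 / real p"
  define s where "s = u ^ m"
  define K where "K = inverse (1+2 * u) * inverse ((1-u)\<^sup>2)"
  have u: "u > 0" "u \<le> 1/3" using p3 by (auto simp: u_def field_simps)
  have nz: "1 + 2 * u \<noteq> 0" "1 - u \<noteq> 0" using u by auto
  have pw: "u^(Suc m + 1) = s * u * u" "u^(Suc m + 2) = s * u * u^2" "u^(Suc m + 3) = s * u * u^3"
     "u^(m + 1) = s * u" "u^(m + 2) = s * u^2" "u^(m + 3) = s * u^3"
    by (simp_all add: s_def power_add mult_ac power2_eq_square power3_eq_cube power4_eq_xxxx)
  have A: "fpp p (Suc m) = K * (1 + 4 * u + 1 * u^2 - (3 * (real m+1)+4) * (s * u * u) - 4 * (s * u * u^2) + (3 * (real m+1) + 2) * (s * u * u^3))"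
    unfolding fpp_odd_form[OF p3, of "Suc m"] u_def[symmetric] K_def[symmetric] pw by simp
  have B: "fpp p m = K * (1 + 4 * u + 1 * u^2 - (3 * real m+4) * (s * u) - 4 * (s * u^2) + (3 * real m + 2) * (s * u^3))"
    unfolding fpp_odd_form[OF p3, of "m"] u_def[symmetric] K_def[symmetric] pw by simp
  have "fpp p (Suc m) - fpp p m = K * (s * u * (1-u)^2 * ((1+2 * u) + 3 * (1+u) * (real m+1)))"
    unfolding A B right_diff_distrib[symmetric] alg_poly ..
  also have "\<dots> = s * u * ((1+2 * u) + 3 * (1+u) * (real m+1)) / (1 + 2 * u)"
  proof -
    have gen: "a \<noteq> 0 \<Longrightarrow> c \<noteq> 0 \<Longrightarrow> inverse a * inverse c * (x * c * y) = x * y / a" for a c x y :: real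
      by (simp add: field_simps)
    show ?thesis unfolding K_def by (rule gen) (use nz in auto)
  qed
  also have "\<dots> = s * u * (1 + 3 * (1+u)/(1+2 * u) * (real m + 1))"
  proof -
    have gen: "a \<noteq> 0 \<Longrightarrow> x * (a + z) / a = x * (1 + z / a)" for a x z :: real
      by (simp add: field_simps)
    show ?thesis by (subst gen) (use nz in auto)
  qed
  also have "\<dots> = Gz p (Suc m)"
    using False by (simp add: Gz_def beta_def s_def u_def)
  finally show ?thesis .
qed

lemma fpp_0: assumes "prime p" shows "fpp p 0 = 1"
proof (cases "p = 2")
  case True then show ?thesis by (simp add: fpp_def)
next
  case False
  with assms have p3: "p \<ge> 3" using prime_ge_2_nat[OF assms] by linarith
  define u where "u = 1 / real p"
  have u: "u > 0" "u \<le> 1/3" using p3 by (auto simp: u_def field_simps)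
  have nz: "1 + 2 * u \<noteq> 0" "1 - u \<noteq> 0" using u by auto
  have e: "1 + 4 * u + 1 * u^2 - (3 * real (0::nat) + 4) * u^(0+1) - 4 * u^(0+2) + (3 * real (0::nat) + 2) * u^(0+3) = (1+2 * u) * (1-u)^2"
    by (simp add: algebra_simps power2_eq_square power3_eq_cube)
  have inv: "a \<noteq> 0 \<Longrightarrow> b \<noteq> 0 \<Longrightarrow> inverse a * inverse b * (a * b) = (1::real)" for a b
    by (simp add: field_simps)
  show ?thesis unfolding fpp_odd_form[OF p3, of 0] u_def[symmetric] e
    by (rule inv) (use nz in auto)
qed

lemma fpp_sum: assumes "prime p" shows "fpp p k = (\<Sum>j\<le>k. Gz p j)"
proof (induction k)
  case 0 then show ?case using fpp_0[OF assms] by simp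
next
  case (Suc k)
  then show ?case using fpp_diff[OF assms, of k] by simp
qed

lemma f_eq_sum_g: assumes "n > 0" shows "f n = (\<Sum>d\<in>{d. d dvd n}. g d)"
proof -
  have "f n = (\<Prod>p\<in>prime_factors n. \<Sum>k\<le>multiplicity p n. Gz p k)"
    unfolding f_def
  proof (rule prod.cong[OF refl])
    fix p assume "p \<in> prime_factors n"
    then have "prime p" by (rule in_prime_factors_imp_prime)
    then show "fpp p (multiplicity p n) = (\<Sum>k\<le>multiplicity p n. Gz p k)" by (rule fpp_sum)
  qed
  also have "\<dots> = (\<Sum>d\<in>{d. d dvd n}. g d)"
    unfolding g_def using divisor_sum_prod[OF assms, where \<phi>=Gz] by simp
  finally show ?thesis .
qed



lemma card_multiples:
  assumes "d > 0"
  shows "card {h\<in>{1..N}. d dvd h} = N div d"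
proof -
  have "{h\<in>{1..N}. d dvd h} = (\<lambda>k. d * k) ` {1..N div d}"
  proof (intro set_eqI iffI)
    fix h assume "h \<in> {h\<in>{1..N}. d dvd h}"
    then obtain k where k: "h = d * k" "1 \<le> h" "h \<le> N" by auto
    then have "k \<ge> 1" by (cases k) auto
    moreover have "k \<le> N div d" using k assms
      by (metis div_le_mono nonzero_mult_div_cancel_left not_gr0)
    ultimately show "h \<in> (\<lambda>k. d * k) ` {1..N div d}" using k by auto
  next
    fix h assume "h \<in> (\<lambda>k. d * k) ` {1..N div d}"
    then obtain k where kk: "k \<in> {1..N div d}" "h = d * k" by blast
    then have k: "h = d * k" "1 \<le> k" "k \<le> N div d" by auto
    have "d * k \<le> d * (N div d)" using k by simp
    also have "\<dots> \<le> N" by simp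
    finally have "h \<le> N" using k by simp
    moreover have "h \<ge> 1" using k assms by simp
    ultimately show "h \<in> {h\<in>{1..N}. d dvd h}" using k by auto
  qed
  moreover have "inj_on (\<lambda>k. d * k) {1..N div d}" using assms by (auto simp: inj_on_def)
  ultimately show ?thesis by (simp add: card_image)
qed

lemma sum_f:
  "(\<Sum>h\<in>{1..N}. f h) = (\<Sum>d\<in>{1..N}. g d * real (N div d))"
proof -
  have "(\<Sum>h\<in>{1..N}. f h) = (\<Sum>h\<in>{1..N}. \<Sum>d\<in>{1..N}. if d dvd h then g d else 0)"
  proof (rule sum.cong[OF refl])
    fix h assume h: "h \<in> {1..N}"
    have "f h = (\<Sum>d\<in>{d. d dvd h}. g d)" using h by (intro f_eq_sum_g) auto
    also have "\<dots> = (\<Sum>d\<in>{d\<in>{1..N}. d dvd h}. g d)"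
    proof (rule sum.cong)
      show "{d. d dvd h} = {d\<in>{1..N}. d dvd h}" using h
        by (auto dest: dvd_imp_le intro: Nat.gr0I)
    qed simp
    also have "\<dots> = (\<Sum>d\<in>{1..N}. if d dvd h then g d else 0)"
      by (rule sum.inter_filter) simp
    finally show "f h = (\<Sum>d\<in>{1..N}. if d dvd h then g d else 0)" .
  qed
  also have "\<dots> = (\<Sum>d\<in>{1..N}. \<Sum>h\<in>{1..N}. if d dvd h then g d else 0)"
    by (rule sum.swap)
  also have "\<dots> = (\<Sum>d\<in>{1..N}. g d * real (N div d))"
  proof (rule sum.cong[OF refl])
    fix d assume d: "d \<in> {1..N}"
    have "(\<Sum>h\<in>{1..N}. if d dvd h then g d else 0) = (\<Sum>h\<in>{h\<in>{1..N}. d dvd h}. g d)"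
      by (rule sum.inter_filter[symmetric]) simp
    also have "\<dots> = real (card {h\<in>{1..N}. d dvd h}) * g d" by (rule sum_constant)
    also have "card {h\<in>{1..N}. d dvd h} = N div d" by (rule card_multiples) (use d in auto)
    also have "real (N div d) * g d = g d * real (N div d)" by simp
    finally show "(\<Sum>h\<in>{1..N}. if d dvd h then g d else 0) = g d * real (N div d)" .
  qed
  finally show ?thesis .
qed

lemma sqrt_prod: "sqrt (\<Prod>x\<in>A. h x) = (\<Prod>x\<in>A. sqrt (h x))"
  by (induction A rule: infinite_finite_induct) (auto simp: real_sqrt_mult)

lemma real_prod_pf: assumes "d > 0" shows "(\<Prod>p\<in>prime_factors d. real p ^ multiplicity p d) = real d"
proof -
  have "(\<Prod>p\<in>prime_factors d. p ^ multiplicity p d) = d"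
    using prod_prime_factors[of d] assms by simp
  then have "real (\<Prod>p\<in>prime_factors d. p ^ multiplicity p d) = real d" by simp
  then show ?thesis by simp
qed

lemma g_div_real: assumes "d > 0"
  shows "g d / real d = (\<Prod>p\<in>prime_factors d. Gz p (multiplicity p d) / real p ^ multiplicity p d)"
  unfolding g_def prod_dividef real_prod_pf[OF assms] ..

lemma g_div_sqrt: assumes "d > 0"
  shows "g d / sqrt (real d) = (\<Prod>p\<in>prime_factors d. Gz p (multiplicity p d) / sqrt (real p) ^ multiplicity p d)"
proof -
  have "sqrt (real d) = (\<Prod>p\<in>prime_factors d. sqrt (real p) ^ multiplicity p d)"
    unfolding real_prod_pf[OF assms, symmetric] sqrt_prod real_sqrt_power ..
  then show ?thesis unfolding g_def prod_dividef by simp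
qed

lemma local_series_bound:
  assumes "prime p"
  shows "(\<Sum>k\<le>m. Gz p k / sqrt (real p) ^ k) \<le> 1 + 14 / (real p * sqrt (real p))"
proof -
  define z where "z = 1 / (real p * sqrt (real p))"
  have p2: "real p \<ge> 2" using prime_ge_2_nat[OF assms] by simp
  have sp: "sqrt (real p) \<ge> 1" using p2 by simp
  have "real p * sqrt (real p) \<ge> 2" using p2 sp mult_mono[of 2 "real p" 1 "sqrt (real p)"] by simp
  then have z: "z > 0" "z \<le> 1/2" unfolding z_def using p2 by (auto simp: field_simps)
  have tm: "Gz p k / sqrt (real p) ^ k = z^k + beta p * (z^k * real k)" for k
    unfolding Gz_def z_def using p2 by (simp add: power_divide field_simps power_mult_distrib)
  have le: "Gz p k / sqrt (real p) ^ k \<le> z^k + 3 * (z^k * real k)" for k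
    unfolding tm using beta_le3[of p] z by (intro add_left_mono mult_right_mono) auto
  have s1: "(\<lambda>k. z^k) sums (1/(1-z))" using z by (intro geometric_sums) auto
  have s2: "(\<lambda>k. z^k * real k) sums (z/(1-z)\<^sup>2)" using z by (intro geometric_sums_times_n) auto
  have s: "(\<lambda>k. z^k + 3 * (z^k * real k)) sums (1/(1-z) + 3 * (z/(1-z)\<^sup>2))"
    by (intro sums_add sums_mult s1 s2)
  have "(\<Sum>k\<le>m. Gz p k / sqrt (real p) ^ k) \<le> (\<Sum>k\<le>m. z^k + 3 * (z^k * real k))"
    by (intro sum_mono le)
  also have "\<dots> \<le> 1/(1-z) + 3 * (z/(1-z)\<^sup>2)"
    using sum_le_suminf[OF sums_summable[OF s], of "{..m}"] sums_unique[OF s] z by auto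
  also have "\<dots> \<le> 1 + 14 * z"
  proof -
    have zz: "z*(1-2*z) \<ge> 0" using z by simp
    have "1 \<le> (1 + 2*z) * (1-z)" using zz by (simp add: algebra_simps)
    then have a: "1/(1-z) \<le> 1 + 2*z" using z by (simp add: divide_le_eq)
    have "(1/2::real)^2 \<le> (1-z)^2" using z by (intro power_mono) auto
    then have q: "(1-z)\<^sup>2 \<ge> 1/4" by (simp add: power2_eq_square)
    have "z \<le> 4*z*(1-z)\<^sup>2" using mult_left_mono[OF q, of "4*z"] z by simp
    then have b: "z/(1-z)\<^sup>2 \<le> 4*z" using q by (simp add: divide_le_eq)
    show ?thesis using a b by linarith
  qed
  finally show ?thesis by (simp add: z_def)
qed


definition yv :: "nat \<Rightarrow> real" where "yv n = 1 / (real n * sqrt (real n))"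

lemma yv_nonneg: "yv n \<ge> 0" by (simp add: yv_def)

lemma yv_summable: "summable yv"
proof -
  have e: "yv n = real n powr (-(3/2))" for n
  proof (cases "n = 0")
    case True then show ?thesis by (simp add: yv_def)
  next
    case False
    have "real n powr (3/2) = real n powr 1 * real n powr (1/2)"
      unfolding powr_add[symmetric] by simp
    also have "\<dots> = real n * sqrt (real n)" using False by (simp add: powr_half_sqrt)
    finally have "real n powr (3/2) = real n * sqrt (real n)" .
    moreover have "real n powr (-(3/2)) = inverse (real n powr (3/2))" by (rule powr_minus)
    ultimately show ?thesis by (simp add: yv_def inverse_eq_divide)
  qed
  show ?thesis unfolding e by (subst summable_real_powr_iff) simp
qed

abbreviation vv :: "nat \<Rightarrow> real" where "vv d \<equiv> g d / sqrt (real d)"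
abbreviation uu :: "nat \<Rightarrow> real" where "uu d \<equiv> g d / real d"

lemma vv_nonneg: "vv d \<ge> 0" by (simp add: g_nonneg)
lemma uu_nonneg: "uu d \<ge> 0" by (simp add: g_nonneg)

lemma vv_summable: "summable vv"
proof (rule summableI_nonneg_bounded)
  show "0 \<le> vv n" for n by (rule vv_nonneg)
  fix n
  define D where "D = {d::nat. d dvd fact n}"
  have fin: "finite D" unfolding D_def by (rule finite_divisors_nat) simp
  have "(\<Sum>i<n. vv i) = (\<Sum>i\<in>{..<n} - {0}. vv i)"
    by (rule sum.mono_neutral_right) auto
  also have "\<dots> \<le> (\<Sum>d\<in>D. vv d)"
  proof (rule sum_mono2[OF fin])
    show "{..<n} - {0} \<subseteq> D" unfolding D_def by (auto intro: dvd_fact)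
  qed (rule vv_nonneg)
  also have "\<dots> = (\<Sum>d\<in>D. \<Prod>p\<in>prime_factors d. Gz p (multiplicity p d) / sqrt (real p) ^ multiplicity p d)"
  proof (rule sum.cong[OF refl])
    fix d assume "d \<in> D"
    then have "d > 0" unfolding D_def by (auto intro: Nat.gr0I)
    then show "vv d = (\<Prod>p\<in>prime_factors d. Gz p (multiplicity p d) / sqrt (real p) ^ multiplicity p d)"
      by (rule g_div_sqrt)
  qed
  also have "\<dots> = (\<Prod>p\<in>prime_factors (fact n). \<Sum>k\<le>multiplicity p (fact n). Gz p k / sqrt (real p) ^ k)"
    unfolding D_def using divisor_sum_prod[where \<phi>="\<lambda>p k. Gz p k / sqrt (real p) ^ k" and n="fact n"] by simp
  also have "\<dots> \<le> (\<Prod>p\<in>prime_factors (fact n::nat). 1 + 14 * yv p)"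
  proof (rule prod_mono)
    fix p assume "p \<in> prime_factors (fact n::nat)"
    then have pp: "prime p" by (rule in_prime_factors_imp_prime)
    show "0 \<le> (\<Sum>k\<le>multiplicity p (fact n). Gz p k / sqrt (real p) ^ k) \<and>
          (\<Sum>k\<le>multiplicity p (fact n). Gz p k / sqrt (real p) ^ k) \<le> 1 + 14 * yv p"
      using local_series_bound[OF pp, of "multiplicity p (fact n)"]
      by (auto intro!: sum_nonneg divide_nonneg_nonneg Gz_nonneg simp: yv_def)
  qed
  also have "\<dots> \<le> (\<Prod>p\<in>prime_factors (fact n::nat). exp (14 * yv p))"
  proof (rule prod_mono)
    fix p
    show "0 \<le> 1 + 14 * yv p \<and> 1 + 14 * yv p \<le> exp (14 * yv p)"
      using yv_nonneg[of p] exp_ge_add_one_self[of "14 * yv p"] by linarith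
  qed
  also have "\<dots> = exp (\<Sum>p\<in>prime_factors (fact n::nat). 14 * yv p)"
    by (simp add: exp_sum)
  also have "\<dots> \<le> exp (\<Sum>p. 14 * yv p)"
    by (subst exp_le_cancel_iff, rule sum_le_suminf) (auto intro: summable_mult yv_summable yv_nonneg)
  finally show "(\<Sum>i<n. vv i) \<le> exp (\<Sum>p. 14 * yv p)" .
qed

lemma uu_le_vv: "uu d \<le> vv d"
proof (cases "d = 0")
  case False
  then have s1: "sqrt (real d) \<ge> 1" by simp
  then have "sqrt (real d) * 1 \<le> sqrt (real d) * sqrt (real d)" by (intro mult_left_mono) auto
  then have "sqrt (real d) \<le> real d" by simp
  moreover have "sqrt (real d) > 0" using False by simp
  ultimately show ?thesis using g_nonneg[of d] by (intro divide_left_mono) auto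
qed simp

lemma uu_summable: "summable uu"
  by (rule summable_comparison_test[OF _ vv_summable]) (use uu_le_vv in \<open>auto simp: abs_of_nonneg g_nonneg\<close>)

lemma div_bounds: assumes "d > 0"
  shows "real (N div d) \<le> real N / real d" "real N / real d < real (N div d) + 1"
proof -
  have e: "real (N div d) = of_int \<lfloor>real N / real d\<rfloor>"
    using floor_divide_of_nat_eq[where 'a=real, of N d] by simp
  show "real (N div d) \<le> real N / real d" unfolding e by simp
  show "real N / real d < real (N div d) + 1" unfolding e by simp
qed

lemma main_bound:
  assumes N: "N \<ge> 1"
  shows "\<bar>(\<Sum>h\<in>{1..N}. f h) - (\<Sum>d. uu d) * real N\<bar> \<le> (\<Sum>d. vv d) * sqrt (real N)"
proof -
  define Tu where "Tu = (\<Sum>k. uu (k + Suc N))"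
  define Tv where "Tv = (\<Sum>k. vv (k + Suc N))"
  have su: "summable (\<lambda>k. uu (k + Suc N))" using uu_summable by (subst summable_iff_shift)
  have sv: "summable (\<lambda>k. vv (k + Suc N))" using vv_summable by (subst summable_iff_shift)
  have init: "(\<Sum>i<Suc N. h i) = h 0 + (\<Sum>i\<in>{1..N}. h i)" for h :: "nat \<Rightarrow> real"
    by (simp add: lessThan_Suc_atMost atMost_atLeast0 sum.atLeast_Suc_atMost)
  have L: "(\<Sum>d. uu d) = Tu + (\<Sum>d\<in>{1..N}. uu d)"
    unfolding Tu_def using suminf_split_initial_segment[OF uu_summable, of "Suc N"] init[of uu] by simp
  have B: "(\<Sum>d. vv d) = Tv + (\<Sum>d\<in>{1..N}. vv d)"
    unfolding Tv_def using suminf_split_initial_segment[OF vv_summable, of "Suc N"] init[of vv] by simp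
  have Tu0: "Tu \<ge> 0" unfolding Tu_def by (rule suminf_nonneg[OF su]) (rule uu_nonneg)
  have sN: "sqrt (real N) \<ge> 0" by simp
  have diff: "(\<Sum>h\<in>{1..N}. f h) - (\<Sum>d. uu d) * real N
     = (\<Sum>d\<in>{1..N}. g d * real (N div d) - g d * (real N / real d)) - real N * Tu"
  proof -
    have e1: "(\<Sum>d\<in>{1..N}. g d * (real N / real d)) = real N * (\<Sum>d\<in>{1..N}. uu d)"
      unfolding sum_distrib_left by (rule sum.cong) auto
    show ?thesis by (simp only: sum_f L sum_subtractf e1) (simp add: algebra_simps)
  qed
  have A1: "\<bar>\<Sum>d\<in>{1..N}. g d * real (N div d) - g d * (real N / real d)\<bar> \<le> sqrt (real N) * (\<Sum>d\<in>{1..N}. vv d)"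
  proof -
    have "\<bar>\<Sum>d\<in>{1..N}. g d * real (N div d) - g d * (real N / real d)\<bar>
        \<le> (\<Sum>d\<in>{1..N}. \<bar>g d * real (N div d) - g d * (real N / real d)\<bar>)" by (rule sum_abs)
    also have "\<dots> \<le> (\<Sum>d\<in>{1..N}. sqrt (real N) * vv d)"
    proof (rule sum_mono)
      fix d assume d: "d \<in> {1..N}"
      then have d0: "d > 0" by simp
      have "\<bar>g d * real (N div d) - g d * (real N / real d)\<bar> = \<bar>g d * (real (N div d) - real N / real d)\<bar>"
        by (simp only: right_diff_distrib)
      also have "\<dots> = g d * \<bar>real (N div d) - real N / real d\<bar>"
        using g_nonneg[of d] by (simp add: abs_mult)
      also have "\<dots> \<le> g d * 1"
        using div_bounds[OF d0, of N] g_nonneg[of d] by (intro mult_left_mono) auto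
      also have "\<dots> \<le> sqrt (real N) * vv d"
      proof -
        have "sqrt (real d) \<le> sqrt (real N)" using d by simp
        moreover have "sqrt (real d) > 0" using d0 by simp
        ultimately have "1 \<le> sqrt (real N) / sqrt (real d)" by simp
        then have "g d * 1 \<le> g d * (sqrt (real N) / sqrt (real d))" using g_nonneg[of d] by (intro mult_left_mono) auto
        also have "g d * (sqrt (real N) / sqrt (real d)) = sqrt (real N) * vv d" by simp
        finally show ?thesis .
      qed
      finally show "\<bar>g d * real (N div d) - g d * (real N / real d)\<bar> \<le> sqrt (real N) * vv d" .
    qed
    also have "\<dots> = sqrt (real N) * (\<Sum>d\<in>{1..N}. vv d)" by (simp add: sum_distrib_left)
    finally show ?thesis .
  qed
  have A2: "real N * Tu \<le> sqrt (real N) * Tv"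
  proof -
    have "real N * Tu = (\<Sum>k. real N * uu (k + Suc N))" unfolding Tu_def by (rule suminf_mult[OF su, symmetric])
    also have "\<dots> \<le> (\<Sum>k. sqrt (real N) * vv (k + Suc N))"
    proof (rule suminf_le)
      fix k
      define d where "d = k + Suc N"
      have dN: "real N < real d" unfolding d_def by simp
      have sd: "sqrt (real N) < sqrt (real d)" using dN by simp
      have sN0: "sqrt (real N) > 0" using N by simp
      have "real N / real d = (sqrt (real N) / sqrt (real d)) * (sqrt (real N) / sqrt (real d))"
        using N dN by (simp add: real_sqrt_mult[symmetric] real_sqrt_divide[symmetric])
      also have "\<dots> \<le> 1 * (sqrt (real N) / sqrt (real d))"
        using sd sN0 by (intro mult_right_mono) auto
      finally have r: "real N / real d \<le> sqrt (real N) / sqrt (real d)" by simp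
      have "real N * uu d = g d * (real N / real d)" by simp
      also have "\<dots> \<le> g d * (sqrt (real N) / sqrt (real d))" using r g_nonneg[of d] by (intro mult_left_mono) auto
      also have "\<dots> = sqrt (real N) * vv d" by simp
      finally show "real N * uu (k + Suc N) \<le> sqrt (real N) * vv (k + Suc N)" unfolding d_def .
    qed (rule summable_mult[OF su], rule summable_mult[OF sv])
    also have "\<dots> = sqrt (real N) * Tv" unfolding Tv_def by (rule suminf_mult[OF sv])
    finally show ?thesis .
  qed
  have "\<bar>(\<Sum>h\<in>{1..N}. f h) - (\<Sum>d. uu d) * real N\<bar> \<le>
        \<bar>\<Sum>d\<in>{1..N}. g d * real (N div d) - g d * (real N / real d)\<bar> + real N * Tu"
    unfolding diff using abs_triangle_ineq4[of "\<Sum>d\<in>{1..N}. g d * real (N div d) - g d * (real N / real d)" "real N * Tu"] Tu0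
    by simp
  also have "\<dots> \<le> sqrt (real N) * (\<Sum>d\<in>{1..N}. vv d) + sqrt (real N) * Tv" using A1 A2 by linarith
  also have "\<dots> = (\<Sum>d. vv d) * sqrt (real N)" unfolding B by (simp add: algebra_simps)
  finally show ?thesis .
qed



definition lp :: "nat \<Rightarrow> real" where "lp p = (\<Sum>k. Gz p k / real p ^ k)"

lemma lp_sums:
  assumes "prime p"
  shows "(\<lambda>k. Gz p k / real p ^ k) sums (1/(1-1/(real p)^2) + beta p * ((1/(real p)^2)/(1-1/(real p)^2)\<^sup>2))"
proof -
  define y where "y = 1/(real p)^2"
  have p2: "real p \<ge> 2" using prime_ge_2_nat[OF assms] by simp
  have "(real p)^2 \<ge> 2^2" using p2 by (intro power_mono) auto
  then have y: "y > 0" "y \<le> 1/4" unfolding y_def using p2 by (auto simp: field_simps)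
  have tm: "Gz p k / real p ^ k = y^k + beta p * (y^k * real k)" for k
  proof -
    have "Gz p k / real p ^ k = (1/real p)^k / real p ^ k * (1 + beta p * real k)"
      by (simp add: Gz_def)
    also have "(1/real p)^k / real p ^ k = y^k"
      by (simp add: y_def power_one_over power_mult_distrib[symmetric] power2_eq_square flip: power_mult)
    finally show ?thesis by (simp add: algebra_simps)
  qed
  have s1: "(\<lambda>k. y^k) sums (1/(1-y))" using y by (intro geometric_sums) auto
  have s2: "(\<lambda>k. y^k * real k) sums (y/(1-y)\<^sup>2)" using y by (intro geometric_sums_times_n) auto
  show ?thesis unfolding tm y_def[symmetric] by (intro sums_add sums_mult s1 s2)
qed

lemma lp_eq: assumes "prime p"
  shows "lp p = 1/(1-1/(real p)^2) + beta p * ((1/(real p)^2)/(1-1/(real p)^2)\<^sup>2)"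
  unfolding lp_def using sums_unique[OF lp_sums[OF assms]] by simp

lemma lp_summable: assumes "prime p" shows "summable (\<lambda>k. Gz p k / real p ^ k)"
  using sums_summable[OF lp_sums[OF assms]] .

lemma alg_local:
  fixes x :: real
  assumes "x > 0" "x \<le> 1/3"
  shows "(1 - x)^2 * (1 + 2*x) * (1/(1-x^2) + 3*(1+x)/(1+2*x) * (x^2/(1-x^2)\<^sup>2))
       = inverse (1 + x) * (1 + x + x^2)"
proof -
  have "x^2 \<le> x * (1/3)" using assms unfolding power2_eq_square by (intro mult_left_mono) auto
  then have nz: "1 - x \<noteq> 0" "1 + x \<noteq> 0" "1 + 2*x \<noteq> 0" "1 - x^2 \<noteq> 0" using assms
    by auto
  have f: "1 - x^2 = (1-x)*(1+x)" by (simp add: algebra_simps power2_eq_square)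
  have "1/(1-x^2) + 3*(1+x)/(1+2*x) * (x^2/(1-x^2)\<^sup>2)
      = ((1-x^2)*(1+2*x) + 3*(1+x)*x^2) / ((1+2*x)*(1-x^2)^2)"
  proof -
    have gen: "D \<noteq> 0 \<Longrightarrow> E \<noteq> 0 \<Longrightarrow> 1/D + a/E * (b/D^2) = (D*E + a*b)/(E*D^2)" for D E a b :: real
      by (simp add: field_simps power2_eq_square)
    show ?thesis by (rule gen) (use nz in auto)
  qed
  also have "(1-x^2)*(1+2*x) + 3*(1+x)*x^2 = (1+x)*(1+x+x^2)"
    by (simp add: algebra_simps power2_eq_square)
  finally have l: "1/(1-x^2) + 3*(1+x)/(1+2*x) * (x^2/(1-x^2)\<^sup>2) = (1+x)*(1+x+x^2) / ((1+2*x)*((1-x)*(1+x))^2)"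
    unfolding f .
  have gen2: "a \<noteq> 0 \<Longrightarrow> b \<noteq> 0 \<Longrightarrow> c \<noteq> 0 \<Longrightarrow> a^2*b*(c*q/(b*(a*c)^2)) = inverse c * q" for a b c q :: real
    by (simp add: field_simps power2_eq_square)
  show ?thesis unfolding l by (rule gen2) (use nz in auto)
qed

lemma local_identity:
  assumes "prime p"
  shows "(1 - 1/real p)^2 * (1 + 2/real p) * lp p =
    (if p = 2 then 32/33 else inverse (1 + 1/real p) * (1 + 1/real p + 1/(real p)^2))"
proof (cases "p = 2")
  case True
  then show ?thesis unfolding lp_eq[OF assms] by (simp add: beta_def power2_eq_square)
next
  case False
  with assms have p3: "p \<ge> 3" using prime_ge_2_nat[OF assms] by linarith
  define x where "x = 1/real p"
  have x: "x > 0" "x \<le> 1/3" using p3 by (auto simp: x_def field_simps)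
  have e: "1/(real p)^2 = x^2" "2/real p = 2*x" by (simp_all add: x_def power_one_over)
  have b: "beta p = 3*(1+x)/(1+2*x)" using False by (simp add: beta_def x_def)
  show ?thesis unfolding lp_eq[OF assms] using False alg_local[OF x]
    by (simp only: e b x_def[symmetric] if_False)
qed


lemma pf_power: assumes "(x::nat) \<noteq> 0" shows "prime_factors (x ^ Suc M) = prime_factors x"
proof -
  have e: "p dvd x ^ Suc M \<longleftrightarrow> p dvd x" if "prime p" for p
    by (rule prime_dvd_power_iff[OF that]) simp
  have "x ^ Suc M \<noteq> 0" using assms by simp
  then show ?thesis using assms e by (simp add: prime_factors_dvd del: power_Suc) blast
qed

lemma euler_bound:
  "\<bar>(\<Prod>p\<in>prime_factors (fact P::nat). lp p) - (\<Sum>d. uu d)\<bar> \<le> (\<Sum>d. uu d) - (\<Sum>d<Suc P. uu d)"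
proof -
  define L where "L = (\<Sum>d. uu d)"
  define S where "S = (\<Sum>d<Suc P. uu d)"
  define F where "F = (fact P :: nat)"
  have F0: "F \<noteq> 0" unfolding F_def by simp
  define X where "X M = (\<Prod>p\<in>prime_factors F. \<Sum>k\<le>Suc M * multiplicity p F. Gz p k / real p ^ k)" for M
  have bound: "\<bar>X M - L\<bar> \<le> L - S" for M
  proof -
    define Q where "Q = F ^ Suc M"
    have Q0: "Q > 0" using F0 by (simp add: Q_def)
    have pfQ: "prime_factors Q = prime_factors F" unfolding Q_def by (rule pf_power[OF F0])
    have mQ: "multiplicity p Q = Suc M * multiplicity p F" if "p \<in> prime_factors F" for p
      unfolding Q_def using that F0
      by (intro prime_elem_multiplicity_power_distrib) (auto dest: in_prime_factors_imp_prime)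
    define D where "D = {d::nat. d dvd Q}"
    have finD: "finite D" unfolding D_def using Q0 by simp
    have "X M = (\<Prod>p\<in>prime_factors Q. \<Sum>k\<le>multiplicity p Q. Gz p k / real p ^ k)"
      unfolding X_def pfQ by (rule prod.cong[OF refl]) (simp add: mQ)
    also have "\<dots> = (\<Sum>d\<in>D. \<Prod>p\<in>prime_factors d. Gz p (multiplicity p d) / real p ^ multiplicity p d)"
      unfolding D_def using divisor_sum_prod[OF Q0, where \<phi>="\<lambda>p k. Gz p k / real p ^ k"] by simp
    also have "\<dots> = (\<Sum>d\<in>D. uu d)"
    proof (rule sum.cong[OF refl])
      fix d assume "d \<in> D"
      then have "d > 0" unfolding D_def using Q0 by (auto intro: Nat.gr0I)
      then show "(\<Prod>p\<in>prime_factors d. Gz p (multiplicity p d) / real p ^ multiplicity p d) = uu d"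
        by (rule g_div_real[symmetric])
    qed
    finally have XD: "X M = (\<Sum>d\<in>D. uu d)" .
    have up: "(\<Sum>d\<in>D. uu d) \<le> L"
      unfolding L_def by (rule sum_le_suminf[OF uu_summable finD]) (simp add: uu_nonneg)
    have "S = (\<Sum>d\<in>{..<Suc P} - {0}. uu d)"
      unfolding S_def by (rule sum.mono_neutral_right) auto
    also have "\<dots> \<le> (\<Sum>d\<in>D. uu d)"
    proof (rule sum_mono2[OF finD])
      show "{..<Suc P} - {0} \<subseteq> D"
      proof
        fix d assume d: "d \<in> {..<Suc P} - {0}"
        then have "d dvd F" unfolding F_def by (auto intro: dvd_fact)
        then have "d dvd Q" unfolding Q_def by simp
        then show "d \<in> D" unfolding D_def by simp
      qed
    qed (rule uu_nonneg)
    finally have lo: "S \<le> (\<Sum>d\<in>D. uu d)" .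
    show ?thesis unfolding XD using up lo by linarith
  qed
  have lim: "X \<longlonglongrightarrow> (\<Prod>p\<in>prime_factors F. lp p)"
    unfolding X_def
  proof (rule tendsto_prod)
    fix p assume p: "p \<in> prime_factors F"
    then have pp: "prime p" by (rule in_prime_factors_imp_prime)
    have m1: "multiplicity p F \<ge> 1" using p by (auto simp: prime_factors_multiplicity)
    have sm: "strict_mono (\<lambda>M. Suc M * multiplicity p F)"
      unfolding strict_mono_Suc_iff using m1 by simp
    have "(\<lambda>n. \<Sum>k\<le>n. Gz p k / real p ^ k) \<longlonglongrightarrow> lp p"
      unfolding lp_def by (rule summable_LIMSEQ'[OF lp_summable[OF pp]])
    from LIMSEQ_subseq_LIMSEQ[OF this sm]
    show "(\<lambda>M. \<Sum>k\<le>Suc M * multiplicity p F. Gz p k / real p ^ k) \<longlonglongrightarrow> lp p"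
      by (simp add: o_def)
  qed
  have "(\<lambda>M. \<bar>X M - L\<bar>) \<longlonglongrightarrow> \<bar>(\<Prod>p\<in>prime_factors F. lp p) - L\<bar>"
    by (intro tendsto_intros lim)
  then have "\<bar>(\<Prod>p\<in>prime_factors F. lp p) - L\<bar> \<le> L - S"
    by (rule LIMSEQ_le_const2) (use bound in auto)
  then show ?thesis unfolding L_def S_def F_def .
qed

lemma euler_lim:
  "(\<lambda>P. \<Prod>p\<in>prime_factors (fact P::nat). lp p) \<longlonglongrightarrow> (\<Sum>d. uu d)"
proof -
  define L where "L = (\<Sum>d. uu d)"
  have s: "(\<lambda>P. \<Sum>d<Suc P. uu d) \<longlonglongrightarrow> L"
    unfolding L_def by (rule LIMSEQ_Suc[OF summable_LIMSEQ[OF uu_summable]])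
  have s2: "(\<lambda>P. 2 * L - (\<Sum>d<Suc P. uu d)) \<longlonglongrightarrow> 2 * L - L"
    by (intro tendsto_intros s)
  show ?thesis unfolding L_def[symmetric]
  proof (rule tendsto_sandwich[OF _ _ s])
    show "(\<lambda>P. 2 * L - (\<Sum>d<Suc P. uu d)) \<longlonglongrightarrow> L" using s2 by simp
    show "\<forall>\<^sub>F P in sequentially. (\<Sum>d<Suc P. uu d) \<le> (\<Prod>p\<in>prime_factors (fact P::nat). lp p)"
    proof (intro always_eventually allI)
      fix P show "(\<Sum>d<Suc P. uu d) \<le> (\<Prod>p\<in>prime_factors (fact P::nat). lp p)"
        using euler_bound[of P] unfolding L_def abs_le_iff by linarith
    qed
    show "\<forall>\<^sub>F P in sequentially. (\<Prod>p\<in>prime_factors (fact P::nat). lp p) \<le> 2 * L - (\<Sum>d<Suc P. uu d)"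
    proof (intro always_eventually allI)
      fix P show "(\<Prod>p\<in>prime_factors (fact P::nat). lp p) \<le> 2 * L - (\<Sum>d<Suc P. uu d)"
        using euler_bound[of P] unfolding L_def abs_le_iff by linarith
    qed
  qed
qed


definition cpf :: "nat \<Rightarrow> real" where
  "cpf p = (if prime p then (1 - 1 / real p)\<^sup>2 * (1 + 2 / real p) else 1)"
definition cef :: "nat \<Rightarrow> real" where
  "cef p = (if prime p \<and> p > 2 then inverse (1 + 1 / real p) * (1 + 1 / real p + 1 / (real p)\<^sup>2) else 1)"

lemma c_coef_eq: "c_coef h = 11/8 * f h * prodinf cpf"
  unfolding c_coef_def cpf_def[abs_def] ..

lemma c_const_eq: "c_const = 4/3 * prodinf cef"
  unfolding c_const_def cef_def[abs_def] ..

lemma inv_sq_summable: "summable (\<lambda>i. 3 * inverse (real i ^ 2))"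
  by (intro summable_mult inverse_power_summable) simp

lemma cpf_conv: "convergent_prod cpf"
proof (intro abs_convergent_prod_imp_convergent_prod summable_imp_abs_convergent_prod)
  show "summable (\<lambda>i. norm (cpf i - 1))"
  proof (rule summable_comparison_test[OF _ inv_sq_summable], intro exI allI impI)
    fix i :: nat
    show "norm (norm (cpf i - 1)) \<le> 3 * inverse (real i ^ 2)"
    proof (cases "prime i")
      case True
      define x where "x = 1 / real i"
      have i2: "real i \<ge> 2" using prime_ge_2_nat[OF True] by simp
      have x: "x > 0" "x \<le> 1/2" using i2 by (auto simp: x_def field_simps)
      have e: "(1 - x)\<^sup>2 * (1 + 2 * x) - 1 = - (x^2 * (3 - 2*x))"
        by (simp add: algebra_simps power2_eq_square power3_eq_cube)
      have nn: "x^2 * (3 - 2*x) \<ge> 0" using x by simp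
      have "x^2 * (3 - 2*x) \<le> x^2 * 3" using x by (intro mult_left_mono) auto
      moreover have x2: "x^2 = inverse (real i ^ 2)" by (simp add: x_def power_one_over inverse_eq_divide)
      moreover have t: "2 / real i = 2 * x" by (simp add: x_def)
      have c: "cpf i - 1 = - (x^2 * (3 - 2*x))"
        using True unfolding cpf_def t x_def[symmetric] e[symmetric] by simp
      ultimately show ?thesis using nn unfolding c by simp
    qed (simp add: cpf_def)
  qed
qed

lemma cef_conv: "convergent_prod cef"
proof (intro abs_convergent_prod_imp_convergent_prod summable_imp_abs_convergent_prod)
  show "summable (\<lambda>i. norm (cef i - 1))"
  proof (rule summable_comparison_test[OF _ inv_sq_summable], intro exI allI impI)
    fix i :: nat
    show "norm (norm (cef i - 1)) \<le> 3 * inverse (real i ^ 2)"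
    proof (cases "prime i \<and> i > 2")
      case True
      define x where "x = 1 / real i"
      have i2: "real i \<ge> 2" using True by simp
      have x: "x > 0" "x \<le> 1/2" using i2 by (auto simp: x_def field_simps)
      have e: "inverse (1 + x) * (1 + x + x^2) - 1 = x^2 / (1 + x)"
        using x by (simp add: field_simps power2_eq_square)
      have nn: "x^2 / (1 + x) \<ge> 0" using x by simp
      have "x^2 / (1 + x) \<le> x^2" using x by (simp add: divide_le_eq)
      also have "\<dots> \<le> 3 * x^2" by simp
      finally have le: "x^2 / (1 + x) \<le> 3 * x^2" .
      have x2: "x^2 = inverse (real i ^ 2)" by (simp add: x_def power_one_over inverse_eq_divide)
      have c: "cef i - 1 = x^2 / (1 + x)"
        using True unfolding cef_def power_one_over[symmetric] x_def[symmetric] e[symmetric] by simp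
      show ?thesis using nn le x2 x unfolding c by simp
    qed (auto simp: cef_def)
  qed
qed

lemma pf_fact_filter: "prime_factors (fact n :: nat) = {i\<in>{..n}. prime i}"
  unfolding prime_factors_fact by (auto dest: prime_ge_2_nat)

lemma prod_cpf: "(\<Prod>i\<le>n. cpf i) = (\<Prod>p\<in>prime_factors (fact n :: nat). (1 - 1 / real p)\<^sup>2 * (1 + 2 / real p))"
  unfolding pf_fact_filter cpf_def by (rule prod.inter_filter[symmetric]) simp

lemma prod_cef: "(\<Prod>i\<le>n. cef i) = (\<Prod>p\<in>prime_factors (fact n :: nat).
      if p = 2 then 1 else inverse (1 + 1 / real p) * (1 + 1 / real p + 1 / (real p)\<^sup>2))"
proof -
  have "(\<Prod>i\<le>n. cef i) = (\<Prod>i\<le>n. if prime i then (if i = 2 then 1 else inverse (1 + 1 / real i) * (1 + 1 / real i + 1 / (real i)\<^sup>2)) else 1)"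
    by (rule prod.cong[OF refl]) (auto simp: cef_def dest: prime_ge_2_nat)
  also have "\<dots> = (\<Prod>p\<in>{i\<in>{..n}. prime i}. if p = 2 then 1 else inverse (1 + 1 / real p) * (1 + 1 / real p + 1 / (real p)\<^sup>2))"
    by (rule prod.inter_filter[symmetric]) simp
  finally show ?thesis unfolding pf_fact_filter .
qed

lemma prod_identity:
  assumes "n \<ge> 2"
  shows "(\<Prod>i\<le>n. cpf i) * (\<Prod>p\<in>prime_factors (fact n :: nat). lp p) = 32/33 * (\<Prod>i\<le>n. cef i)"
proof -
  define P where "P = prime_factors (fact n :: nat)"
  have finP: "finite P" unfolding P_def by simp
  have twoP: "2 \<in> P" unfolding P_def pf_fact_filter using assms by auto
  have "(\<Prod>i\<le>n. cpf i) * (\<Prod>p\<in>P. lp p) = (\<Prod>p\<in>P. (1 - 1 / real p)\<^sup>2 * (1 + 2 / real p) * lp p)"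
    unfolding prod_cpf P_def[symmetric] prod.distrib ..
  also have "\<dots> = (\<Prod>p\<in>P. (if p = 2 then 32/33 else 1) * (if p = 2 then 1 else inverse (1 + 1 / real p) * (1 + 1 / real p + 1 / (real p)\<^sup>2)))"
  proof (rule prod.cong[OF refl])
    fix p assume "p \<in> P"
    then have "prime p" unfolding P_def by (rule in_prime_factors_imp_prime)
    from local_identity[OF this] show "(1 - 1 / real p)\<^sup>2 * (1 + 2 / real p) * lp p =
      (if p = 2 then 32/33 else 1) * (if p = 2 then 1 else inverse (1 + 1 / real p) * (1 + 1 / real p + 1 / (real p)\<^sup>2))"
      by simp
  qed
  also have "\<dots> = (\<Prod>p\<in>P. if p = 2 then 32/33 else 1) * (\<Prod>i\<le>n. cef i)"
    unfolding prod.distrib prod_cef P_def ..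
  also have "(\<Prod>p\<in>P. if p = 2 then 32/33 else 1) = (32/33::real)"
    using finP twoP by simp
  finally show ?thesis unfolding P_def .
qed

lemma constant_identity: "c_const = 11/8 * prodinf cpf * (\<Sum>d. uu d)"
proof -
  have l1: "(\<lambda>n. (\<Prod>i\<le>n. cpf i) * (\<Prod>p\<in>prime_factors (fact n :: nat). lp p)) \<longlonglongrightarrow> prodinf cpf * (\<Sum>d. uu d)"
    by (intro tendsto_mult convergent_prod_LIMSEQ cpf_conv euler_lim)
  have l2: "(\<lambda>n. 32/33 * (\<Prod>i\<le>n. cef i)) \<longlonglongrightarrow> 32/33 * prodinf cef"
    by (intro tendsto_mult tendsto_const convergent_prod_LIMSEQ cef_conv)
  have ev: "\<forall>\<^sub>F n in sequentially. (\<Prod>i\<le>n. cpf i) * (\<Prod>p\<in>prime_factors (fact n :: nat). lp p) = 32/33 * (\<Prod>i\<le>n. cef i)"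
    using eventually_ge_at_top[of "2::nat"] by eventually_elim (rule prod_identity)
  have l3: "(\<lambda>n. 32/33 * (\<Prod>i\<le>n. cef i)) \<longlonglongrightarrow> prodinf cpf * (\<Sum>d. uu d)"
    by (rule Lim_transform_eventually[OF l1 ev])
  have "prodinf cpf * (\<Sum>d. uu d) = 32/33 * prodinf cef"
    using LIMSEQ_unique[OF l3 l2] .
  then show ?thesis unfolding c_const_eq by simp
qed


theorem lemma5:
  shows "\<exists>C. \<forall>X H. X > 1 \<longrightarrow> H \<ge> 1 \<longrightarrow>
           \<bar>Sigma2 X H - c_const * X * H * (ln X) ^ 3\<bar> \<le> C * X * sqrt H * (ln X) ^ 3"
proof -
  define A where "A = 11/8 * prodinf cpf"
  define L where "L = (\<Sum>d. uu d)"
  define B where "B = (\<Sum>d. vv d)"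
  have B0: "B \<ge> 0" unfolding B_def by (rule suminf_nonneg[OF vv_summable vv_nonneg])
  have cc: "c_const = A * L" unfolding A_def L_def constant_identity by simp
  show ?thesis
  proof (intro exI allI impI)
    fix X H :: real
    assume X: "X > 1" and H: "H \<ge> 1"
    define N where "N = nat \<lfloor>H\<rfloor>"
    have fl: "\<lfloor>H\<rfloor> \<ge> 1" using H by simp
    have RN: "real N = of_int \<lfloor>H\<rfloor>" unfolding N_def using fl by simp
    have iN: "int N = \<lfloor>H\<rfloor>" unfolding N_def using fl by simp
    have N1: "N \<ge> 1" using iN fl by linarith
    have NH: "real N \<le> H" unfolding RN by simp
    have HN: "H < real N + 1" unfolding RN by simp
    define K where "K = X * (ln X)^3"
    have K0: "K > 0" unfolding K_def using X by simp
    define S where "S = (\<Sum>h\<in>{1..N}. f h)"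
    have sig: "Sigma2 X H = A * K * S"
      unfolding Sigma2_def N_def[symmetric] S_def A_def K_def c_coef_eq
      by (simp add: sum_distrib_left sum_distrib_right mult_ac)
    have mb: "\<bar>S - L * real N\<bar> \<le> B * sqrt (real N)"
      unfolding S_def L_def B_def by (rule main_bound[OF N1])
    have sNH: "sqrt (real N) \<le> sqrt H" using NH by simp
    have sH1: "1 \<le> sqrt H" using H by simp
    have "\<bar>S - L * H\<bar> \<le> \<bar>S - L * real N\<bar> + \<bar>L\<bar> * (H - real N)"
    proof -
      have "\<bar>S - L * H\<bar> \<le> \<bar>S - L * real N\<bar> + \<bar>L * (H - real N)\<bar>"
        using abs_triangle_ineq[of "S - L * real N" "- (L * (H - real N))"] by (simp add: algebra_simps)
      also have "\<bar>L * (H - real N)\<bar> = \<bar>L\<bar> * (H - real N)" using NH by (simp add: abs_mult)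
      finally show ?thesis .
    qed
    also have "\<dots> \<le> B * sqrt H + \<bar>L\<bar> * sqrt H"
    proof -
      have "B * sqrt (real N) \<le> B * sqrt H" by (rule mult_left_mono[OF sNH B0])
      moreover have "\<bar>L\<bar> * (H - real N) \<le> \<bar>L\<bar> * sqrt H"
        using HN sH1 by (intro mult_left_mono) linarith+
      ultimately show ?thesis using mb by linarith
    qed
    finally have main: "\<bar>S - L * H\<bar> \<le> (B + \<bar>L\<bar>) * sqrt H" by (simp add: algebra_simps)
    have "\<bar>Sigma2 X H - c_const * X * H * (ln X) ^ 3\<bar> = \<bar>A\<bar> * K * \<bar>S - L * H\<bar>"
    proof -
      have "Sigma2 X H - c_const * X * H * (ln X) ^ 3 = A * K * (S - L * H)"
        unfolding sig cc K_def by (simp add: algebra_simps)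
      then show ?thesis using K0 by (simp add: abs_mult)
    qed
    also have "\<dots> \<le> \<bar>A\<bar> * K * ((B + \<bar>L\<bar>) * sqrt H)"
      using K0 main by (intro mult_left_mono) auto
    also have "\<dots> = \<bar>A\<bar> * (B + \<bar>L\<bar>) * X * sqrt H * (ln X) ^ 3"
      unfolding K_def by (simp add: mult_ac)
    finally show "\<bar>Sigma2 X H - c_const * X * H * (ln X) ^ 3\<bar> \<le> \<bar>A\<bar> * (B + \<bar>L\<bar>) * X * sqrt H * (ln X) ^ 3" .
  qed
qed


end
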